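(* Let $G$ be a feasible graph of diameter $D$ and election index $\phi$, and let $x\ge \phi$ be an integer given as input to all nodes. Consider the following algorithm Generic$(x)$ executed by every node $u$: in rounds $0,\dots,x-1$ each node sends its current augmented truncated view to all neighbours (so that $u$ learns $\mathcal{B}^x(u)$); then for $r=x,x+1,\dots$, in round $r$ the node sends $\mathcal{B}^r(u)$ to all neighbours and receives theirs, so that it knows $\mathcal{B}=\mathcal{B}^{r+1}(u)$, and computes $X$ = the set of views $\mathcal{B}^x(v)$ for all nodes $v$ at depth at most $r-x$ in $\mathcal{B}$ (these are determined by $\mathcal{B}$) and $Y$ = the set of views $\mathcal{B}^x(v)$ for all nodes $v$ at depth exactly $r-x+1$ in $\mathcal{B}$; it stops iterating at the first $r$ with $Y\subseteq X$. It then lets $\mathcal{B}_{min}$ be the lexicographically smallest view in $X$, lets $W$ be the set of nodes $v$ of smallest depth in $\mathcal{B}$ with $\mathcal{B}^x(v)=\mathcal{B}_{min}$, picks $w\in W$ whose sequence of port numbers from the root is lexicographically smallest, and outputs the sequence of port numbers of the shortest path from the root $u$ to $w$ in $\mathcal{B}$. Then Generic$(x)$ is a correct leader election algorithm in $G$ and works in time at most $D+x+1$.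
   Context: A graph is a simple undirected connected finite graph whose nodes have no identifiers; at each node $v$ of degree $d$ the incident edges carry distinct port numbers $0,\dots,d-1$ (local to each node). The truncated view $\mathcal{V}^0(v)$ is a single node; $\mathcal{V}^{l+1}(v)$ is the port-labelled rooted tree whose root has, for every neighbour $v_i$ of $v$, a child $x_i$ joined by an edge carrying the same two port numbers as $\{v,v_i\}$ (the one at $v$ at the root side), and $x_i$ is the root of a copy of $\mathcal{V}^l(v_i)$. The augmented truncated view $\mathcal{B}^l(v)$ is $\mathcal{V}^l(v)$ with each leaf labelled by the degree in $G$ of the node it represents; augmented truncated views are canonically coded as binary strings and ordered lexicographically by these codes. A graph is feasible if for some $l$ the views $\mathcal{B}^l(v)$ of all nodes are pairwise distinct; its election index is the smallest such $l$. Model (LOCAL): synchronous rounds numbered from 0, all nodes start simultaneously, in each round every node exchanges arbitrary messages with all neighbours and computes arbitrarily. Leader election: every node $v$ outputs a sequence $(p_1,q_1,\dots,p_k,q_k)$ of nonnegative integers describing a simple path starting at $v$ whose $i$-th edge has port $p_i$ at its endpoint closer to $v$ and $q_i$ at the other endpoint; all these paths must end at a common node. Time is the number of rounds until all nodes output. $D$ is the diameter of $G$. *)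

theory Defs
  imports Main
begin

text \<open>A graph is given by a vertex set V, a degree function deg and a port
function nbr: nbr v p is the neighbour of v reached through port p (p < deg v).\<close>

definition port_graph :: "'a set \<Rightarrow> ('a \<Rightarrow> nat) \<Rightarrow> ('a \<Rightarrow> nat \<Rightarrow> 'a) \<Rightarrow> bool" where
  "port_graph V deg nbr \<longleftrightarrow>
     finite V \<and> V \<noteq> {} \<and>
     (\<forall>v\<in>V. \<forall>p<deg v. nbr v p \<in> V \<and> nbr v p \<noteq> v) \<and>
     (\<forall>v\<in>V. inj_on (nbr v) {..<deg v}) \<and>
     (\<forall>v\<in>V. \<forall>p<deg v. \<exists>q<deg (nbr v p). nbr (nbr v p) q = v)"

definition adj :: "'a set \<Rightarrow> ('a \<Rightarrow> nat) \<Rightarrow> ('a \<Rightarrow> nat \<Rightarrow> 'a) \<Rightarrow> ('a \<times> 'a) set" where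
  "adj V deg nbr = {(v, w). v \<in> V \<and> (\<exists>p<deg v. nbr v p = w)}"

definition connected_pg :: "'a set \<Rightarrow> ('a \<Rightarrow> nat) \<Rightarrow> ('a \<Rightarrow> nat \<Rightarrow> 'a) \<Rightarrow> bool" where
  "connected_pg V deg nbr \<longleftrightarrow> (\<forall>v\<in>V. \<forall>w\<in>V. (v, w) \<in> (adj V deg nbr)\<^sup>*)"

definition rport :: "('a \<Rightarrow> nat) \<Rightarrow> ('a \<Rightarrow> nat \<Rightarrow> 'a) \<Rightarrow> 'a \<Rightarrow> nat \<Rightarrow> nat" where
  "rport deg nbr v p = (THE q. q < deg (nbr v p) \<and> nbr (nbr v p) q = v)"

definition gdist :: "'a set \<Rightarrow> ('a \<Rightarrow> nat) \<Rightarrow> ('a \<Rightarrow> nat \<Rightarrow> 'a) \<Rightarrow> 'a \<Rightarrow> 'a \<Rightarrow> nat" where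
  "gdist V deg nbr u v = (LEAST n. (u, v) \<in> (adj V deg nbr) ^^ n)"

definition diameter :: "'a set \<Rightarrow> ('a \<Rightarrow> nat) \<Rightarrow> ('a \<Rightarrow> nat \<Rightarrow> 'a) \<Rightarrow> nat" where
  "diameter V deg nbr = Max {gdist V deg nbr u v | u v. u \<in> V \<and> v \<in> V}"

text \<open>A view: a leaf labelled by a degree, or an inner node with a list of
children, each child edge labelled (port at parent side, port at child side),
ordered by the port at the parent.\<close>
datatype view = VLeaf nat | VNode "(nat \<times> nat \<times> view) list"

fun aview :: "('a \<Rightarrow> nat) \<Rightarrow> ('a \<Rightarrow> nat \<Rightarrow> 'a) \<Rightarrow> nat \<Rightarrow> 'a \<Rightarrow> view" where
  "aview deg nbr 0 v = VLeaf (deg v)"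
| "aview deg nbr (Suc l) v =
     VNode (map (\<lambda>p. (p, rport deg nbr v p, aview deg nbr l (nbr v p))) [0..<deg v])"

definition feasible :: "'a set \<Rightarrow> ('a \<Rightarrow> nat) \<Rightarrow> ('a \<Rightarrow> nat \<Rightarrow> 'a) \<Rightarrow> bool" where
  "feasible V deg nbr \<longleftrightarrow> (\<exists>l. inj_on (aview deg nbr l) V)"

definition election_index :: "'a set \<Rightarrow> ('a \<Rightarrow> nat) \<Rightarrow> ('a \<Rightarrow> nat \<Rightarrow> 'a) \<Rightarrow> nat" where
  "election_index V deg nbr = (LEAST l. inj_on (aview deg nbr l) V)"

text \<open>Lexicographic order of views, via an (injective) binary coding.\<close>
definition view_less :: "(view \<Rightarrow> bool list) \<Rightarrow> view \<Rightarrow> view \<Rightarrow> bool" where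
  "view_less code a b \<longleftrightarrow> (code a, code b) \<in> lexord {(False, True)}"

text \<open>Nodes at depth k of a view tree, with the sequence p1,q1,...,pk,qk of
port numbers on the path from the root, and the subtree rooted there.\<close>
fun at_depth :: "nat \<Rightarrow> view \<Rightarrow> (nat list \<times> view) list" where
  "at_depth 0 t = [([], t)]"
| "at_depth (Suc k) (VLeaf d) = []"
| "at_depth (Suc k) (VNode cs) =
     concat (map (\<lambda>(p, q, t). map (\<lambda>(s, t'). (p # q # s, t')) (at_depth k t)) cs)"

text \<open>Truncation of a (sufficiently deep) subtree to depth k, labelling new
leaves by their degree (= number of children in the tree).\<close>
fun trunc :: "nat \<Rightarrow> view \<Rightarrow> view" where
  "trunc 0 (VLeaf d) = VLeaf d"
| "trunc 0 (VNode cs) = VLeaf (length cs)"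
| "trunc (Suc k) (VLeaf d) = VLeaf d"
| "trunc (Suc k) (VNode cs) = VNode (map (\<lambda>(p, q, t). (p, q, trunc k t)) cs)"

definition gen_X :: "nat \<Rightarrow> nat \<Rightarrow> view \<Rightarrow> view set" where
  "gen_X x r B = {trunc x t | s t d. d \<le> r - x \<and> (s, t) \<in> set (at_depth d B)}"

definition gen_Y :: "nat \<Rightarrow> nat \<Rightarrow> view \<Rightarrow> view set" where
  "gen_Y x r B = {trunc x t | s t. (s, t) \<in> set (at_depth (r - x + 1) B)}"

definition gen_stop :: "nat \<Rightarrow> nat \<Rightarrow> view \<Rightarrow> bool" where
  "gen_stop x r B \<longleftrightarrow> gen_Y x r B \<subseteq> gen_X x r B"

definition gen_Bmin :: "(view \<Rightarrow> bool list) \<Rightarrow> nat \<Rightarrow> nat \<Rightarrow> view \<Rightarrow> view" where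
  "gen_Bmin code x r B =
     (THE b. b \<in> gen_X x r B \<and> (\<forall>c\<in>gen_X x r B. c \<noteq> b \<longrightarrow> view_less code b c))"

definition gen_output :: "(view \<Rightarrow> bool list) \<Rightarrow> nat \<Rightarrow> nat \<Rightarrow> view \<Rightarrow> nat list" where
  "gen_output code x r B =
     (let bm = gen_Bmin code x r B;
          d0 = (LEAST d. \<exists>s t. (s, t) \<in> set (at_depth d B) \<and> trunc x t = bm);
          W = {s. \<exists>t. (s, t) \<in> set (at_depth d0 B) \<and> trunc x t = bm}
      in THE s. s \<in> W \<and> (\<forall>s'\<in>W. s' \<noteq> s \<longrightarrow> (s, s') \<in> lexord {(a, b). a < b}))"

text \<open>Node u executing Generic(x): after round r (r \<ge> x) it knows
B = aview (r+1) u; it stops at the first such r with Y \<subseteq> X.\<close>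
definition gen_stop_round ::
  "('a \<Rightarrow> nat) \<Rightarrow> ('a \<Rightarrow> nat \<Rightarrow> 'a) \<Rightarrow> nat \<Rightarrow> 'a \<Rightarrow> nat" where
  "gen_stop_round deg nbr x u = (LEAST r. x \<le> r \<and> gen_stop x r (aview deg nbr (Suc r) u))"

definition generic_out ::
  "('a \<Rightarrow> nat) \<Rightarrow> ('a \<Rightarrow> nat \<Rightarrow> 'a) \<Rightarrow> (view \<Rightarrow> bool list) \<Rightarrow> nat \<Rightarrow> 'a \<Rightarrow> nat list" where
  "generic_out deg nbr code x u =
     (let r = gen_stop_round deg nbr x u in gen_output code x r (aview deg nbr (Suc r) u))"

text \<open>Number of rounds until u outputs: rounds 0..r, i.e. r+1 rounds.\<close>
definition generic_time :: "('a \<Rightarrow> nat) \<Rightarrow> ('a \<Rightarrow> nat \<Rightarrow> 'a) \<Rightarrow> nat \<Rightarrow> 'a \<Rightarrow> nat" where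
  "generic_time deg nbr x u = gen_stop_round deg nbr x u + 1"

fun follow :: "('a \<Rightarrow> nat) \<Rightarrow> ('a \<Rightarrow> nat \<Rightarrow> 'a) \<Rightarrow> 'a \<Rightarrow> nat list \<Rightarrow> 'a list option" where
  "follow deg nbr v [] = Some [v]"
| "follow deg nbr v [p] = None"
| "follow deg nbr v (p # q # s) =
     (if p < deg v \<and> rport deg nbr v p = q
      then map_option (Cons v) (follow deg nbr (nbr v p) s) else None)"

definition leader_election ::
  "'a set \<Rightarrow> ('a \<Rightarrow> nat) \<Rightarrow> ('a \<Rightarrow> nat \<Rightarrow> 'a) \<Rightarrow> ('a \<Rightarrow> nat list) \<Rightarrow> bool" where
  "leader_election V deg nbr out \<longleftrightarrow>
     (\<exists>l\<in>V. \<forall>u\<in>V. \<exists>vs. follow deg nbr u (out u) = Some vs \<and> distinct vs \<and> last vs = l)"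

end

theory Submission
  imports Defs "HOL-Library.List_Lexorder"
begin


lemma follow_len:
  "follow deg nbr u s = Some vs \<Longrightarrow> length vs = Suc (length s div 2) \<and> even (length s) \<and> hd vs = u"
  by (induction deg nbr u s arbitrary: vs rule: follow.induct) (auto split: if_splits)

lemma trunc_aview: "k \<le> m \<Longrightarrow> trunc k (aview deg nbr m v) = aview deg nbr k v"
proof (induction k arbitrary: m v)
  case 0 then show ?case by (cases m) auto
next
  case (Suc k) then obtain m' where "m = Suc m'" by (cases m) auto
  with Suc show ?case by auto
qed

lemma at_depth_aview:
  "d \<le> m \<Longrightarrow> (s, t) \<in> set (at_depth d (aview deg nbr m u)) \<longleftrightarrow>
     (\<exists>vs. follow deg nbr u s = Some vs \<and> length vs = Suc d \<and> t = aview deg nbr (m - d) (last vs))"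
proof (induction d arbitrary: m u s t)
  case 0
  show ?case
  proof
    assume "(s, t) \<in> set (at_depth 0 (aview deg nbr m u))"
    then show "\<exists>vs. follow deg nbr u s = Some vs \<and> length vs = Suc 0 \<and> t = aview deg nbr (m - 0) (last vs)"
      by auto
  next
    assume "\<exists>vs. follow deg nbr u s = Some vs \<and> length vs = Suc 0 \<and> t = aview deg nbr (m - 0) (last vs)"
    then obtain vs where vs: "follow deg nbr u s = Some vs" "length vs = Suc 0" "t = aview deg nbr m (last vs)" by auto
    from follow_len[OF vs(1)] vs(2) have "s = []" by auto
    with vs show "(s, t) \<in> set (at_depth 0 (aview deg nbr m u))" by auto
  qed
next
  case (Suc d)
  then obtain m' where m: "m = Suc m'" and dm: "d \<le> m'" by (cases m) auto
  show ?case
  proof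
    assume "(s, t) \<in> set (at_depth (Suc d) (aview deg nbr m u))"
    then obtain p s' where p: "p < deg u" "s = p # rport deg nbr u p # s'"
      "(s', t) \<in> set (at_depth d (aview deg nbr m' (nbr u p)))"
      by (auto simp: m)
    from Suc.IH[OF dm] p(3) obtain vs where vs: "follow deg nbr (nbr u p) s' = Some vs"
      "length vs = Suc d" "t = aview deg nbr (m' - d) (last vs)" by blast
    have "vs \<noteq> []" using vs(2) by auto
    then show "\<exists>vs. follow deg nbr u s = Some vs \<and> length vs = Suc (Suc d) \<and> t = aview deg nbr (m - Suc d) (last vs)"
      using vs p by (intro exI[of _ "u # vs"]) (auto simp: m)
  next
    assume "\<exists>vs. follow deg nbr u s = Some vs \<and> length vs = Suc (Suc d) \<and> t = aview deg nbr (m - Suc d) (last vs)"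
    then obtain vs where vs: "follow deg nbr u s = Some vs" "length vs = Suc (Suc d)"
      "t = aview deg nbr (m - Suc d) (last vs)" by blast
    have "length s \<ge> 2" using vs follow_len[OF vs(1)] by auto
    then obtain p q s' where s: "s = p # q # s'"
      by (cases s; cases "tl s") auto
    from vs(1) s obtain vs' where c: "p < deg u" "rport deg nbr u p = q"
      "follow deg nbr (nbr u p) s' = Some vs'" "vs = u # vs'"
      by (auto split: if_splits)
    have "vs' \<noteq> []" using c(4) vs(2) by auto
    then have "(s', t) \<in> set (at_depth d (aview deg nbr m' (nbr u p)))"
      using Suc.IH[OF dm] c vs by (auto simp: m)
    then show "(s, t) \<in> set (at_depth (Suc d) (aview deg nbr m u))"
      using c s by (force simp: m)
  qed
qed



context
  fixes V :: "'a set" and deg :: "'a \<Rightarrow> nat" and nbr :: "'a \<Rightarrow> nat \<Rightarrow> 'a"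
  assumes pg: "port_graph V deg nbr"
begin

lemma nbr_in: "v \<in> V \<Longrightarrow> p < deg v \<Longrightarrow> nbr v p \<in> V"
  using pg unfolding port_graph_def by blast

lemma adj_iff: "u \<in> V \<Longrightarrow> (u, w) \<in> adj V deg nbr \<longleftrightarrow> (\<exists>p<deg u. nbr u p = w)"
  unfolding adj_def by auto

lemma relpow_V: "(u, v) \<in> adj V deg nbr ^^ d \<Longrightarrow> u \<in> V \<Longrightarrow> v \<in> V"
proof (induction d arbitrary: v)
  case 0 then show ?case by auto
next
  case (Suc d)
  then obtain w where "(u, w) \<in> adj V deg nbr ^^ d" "(w, v) \<in> adj V deg nbr"
    by (auto elim: relpow_Suc_E)
  with Suc show ?case unfolding adj_def using nbr_in by auto
qed

lemma walk_relpow: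
  "u \<in> V \<Longrightarrow> (u, v) \<in> adj V deg nbr ^^ d \<longleftrightarrow>
     (\<exists>s vs. follow deg nbr u s = Some vs \<and> length vs = Suc d \<and> last vs = v)"
proof (induction d arbitrary: u)
  case 0
  show ?case
  proof
    assume "(u, v) \<in> adj V deg nbr ^^ 0"
    then show "\<exists>s vs. follow deg nbr u s = Some vs \<and> length vs = Suc 0 \<and> last vs = v"
      by (intro exI[of _ "[]"] exI[of _ "[u]"]) auto
  next
    assume "\<exists>s vs. follow deg nbr u s = Some vs \<and> length vs = Suc 0 \<and> last vs = v"
    then obtain s vs where vs: "follow deg nbr u s = Some vs" "length vs = Suc 0" "last vs = v" by blast
    from follow_len[OF vs(1)] vs(2) have "vs = [u]" by (cases vs) auto
    with vs show "(u, v) \<in> adj V deg nbr ^^ 0" by auto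
  qed
next
  case (Suc d)
  show ?case
  proof
    assume "(u, v) \<in> adj V deg nbr ^^ Suc d"
    then obtain w where w: "(u, w) \<in> adj V deg nbr" "(w, v) \<in> adj V deg nbr ^^ d"
      by (blast dest: relpow_Suc_D2)
    then obtain p where p: "p < deg u" "nbr u p = w" using adj_iff Suc.prems by auto
    with Suc.IH[of w] w nbr_in Suc.prems obtain s vs where
      vs: "follow deg nbr w s = Some vs" "length vs = Suc d" "last vs = v" by blast
    have "vs \<noteq> []" using vs by auto
    then show "\<exists>s vs. follow deg nbr u s = Some vs \<and> length vs = Suc (Suc d) \<and> last vs = v"
      using vs p by (intro exI[of _ "p # rport deg nbr u p # s"] exI[of _ "u # vs"]) auto
  next
    assume "\<exists>s vs. follow deg nbr u s = Some vs \<and> length vs = Suc (Suc d) \<and> last vs = v"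
    then obtain s vs where vs: "follow deg nbr u s = Some vs" "length vs = Suc (Suc d)" "last vs = v"
      by blast
    have "length s \<ge> 2" using vs follow_len[OF vs(1)] by auto
    then obtain p q s' where s: "s = p # q # s'"
      by (cases s; cases "tl s") auto
    from vs(1) s obtain vs' where c: "p < deg u" "rport deg nbr u p = q"
      "follow deg nbr (nbr u p) s' = Some vs'" "vs = u # vs'"
      by (auto split: if_splits)
    have "vs' \<noteq> []" using c(4) vs(2) by auto
    then have "(nbr u p, v) \<in> adj V deg nbr ^^ d"
      using Suc.IH[of "nbr u p"] nbr_in[OF Suc.prems c(1)] c vs by auto
    moreover have "(u, nbr u p) \<in> adj V deg nbr" using adj_iff Suc.prems c by auto
    ultimately show "(u, v) \<in> adj V deg nbr ^^ Suc d" by (rule relpow_Suc_I2[rotated])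
  qed
qed

lemma walk_idx:
  "follow deg nbr u s = Some vs \<Longrightarrow> u \<in> V \<Longrightarrow> i < length vs \<Longrightarrow>
   (u, vs ! i) \<in> adj V deg nbr ^^ i \<and> (vs ! i, last vs) \<in> adj V deg nbr ^^ (length vs - 1 - i)"
proof (induction s arbitrary: u vs i rule: induct_list012)
  case 1
  then show ?case by auto
next
  case (2 p)
  then show ?case by auto
next
  case (3 p q s)
  from "3.prems" obtain vs' where c: "p < deg u" "rport deg nbr u p = q"
      "follow deg nbr (nbr u p) s = Some vs'" "vs = u # vs'"
    by (auto split: if_splits)
  have w: "nbr u p \<in> V" using nbr_in "3.prems" c by auto
  have e: "(u, nbr u p) \<in> adj V deg nbr" using adj_iff "3.prems" c by auto
  have ne: "vs' \<noteq> []" "hd vs' = nbr u p" using follow_len[OF c(3)] by auto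
  show ?case
  proof (cases i)
    case 0
    have "(nbr u p, last vs') \<in> adj V deg nbr ^^ (length vs' - 1 - 0)"
      using "3.IH"(1)[OF c(3) w, of 0] ne by (auto simp: hd_conv_nth)
    then have "(u, last vs') \<in> adj V deg nbr ^^ Suc (length vs' - 1)"
      using relpow_Suc_I2[OF e] by simp
    then show ?thesis using 0 c ne by auto
  next
    case (Suc j)
    then have j: "j < length vs'" using "3.prems" c by auto
    from "3.IH"(1)[OF c(3) w j] have h: "(nbr u p, vs' ! j) \<in> adj V deg nbr ^^ j"
      "(vs' ! j, last vs') \<in> adj V deg nbr ^^ (length vs' - 1 - j)" by auto
    have "(u, vs' ! j) \<in> adj V deg nbr ^^ Suc j" using relpow_Suc_I2[OF e h(1)] .
    then show ?thesis using h(2) Suc c ne by auto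
  qed
qed

end


lemma view_less_iff: "view_less code a b \<longleftrightarrow> code a < code b"
proof -
  have eq: "{(u::bool, v). u < v} = {(False, True)}" by auto
  show ?thesis unfolding view_less_def list_less_def eq ..
qed

context
  fixes V :: "'a set" and deg :: "'a \<Rightarrow> nat" and nbr :: "'a \<Rightarrow> nat \<Rightarrow> 'a" and x :: nat
  assumes pg: "port_graph V deg nbr"
    and con: "connected_pg V deg nbr"
    and injx: "inj_on (aview deg nbr x) V"
begin

abbreviation "R \<equiv> adj V deg nbr"

lemma X_eq:
  assumes "x \<le> r" "u \<in> V"
  shows "gen_X x r (aview deg nbr (Suc r) u) = aview deg nbr x ` {v. \<exists>d\<le>r-x. (u, v) \<in> R ^^ d}"
proof (rule set_eqI)
  fix b
  show "b \<in> gen_X x r (aview deg nbr (Suc r) u) \<longleftrightarrow> b \<in> aview deg nbr x ` {v. \<exists>d\<le>r-x. (u, v) \<in> R ^^ d}"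
  proof
    assume "b \<in> gen_X x r (aview deg nbr (Suc r) u)"
    then obtain s t d where h: "b = trunc x t" "d \<le> r - x" "(s, t) \<in> set (at_depth d (aview deg nbr (Suc r) u))"
      unfolding gen_X_def by blast
    have dle: "d \<le> Suc r" using h(2) by simp
    from h(3) at_depth_aview[OF dle, where s=s and t=t and deg=deg and nbr=nbr and u=u] obtain vs where
      vs: "follow deg nbr u s = Some vs" "length vs = Suc d" "t = aview deg nbr (Suc r - d) (last vs)"
      by blast
    have "b = aview deg nbr x (last vs)" using h(1,2) vs(3) trunc_aview[of x "Suc r - d" deg nbr "last vs"] assms(1) by simp
    moreover have "(u, last vs) \<in> R ^^ d" using walk_relpow[OF pg assms(2)] vs by blast
    ultimately show "b \<in> aview deg nbr x ` {v. \<exists>d\<le>r-x. (u, v) \<in> R ^^ d}" using h(2) by blast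
  next
    assume "b \<in> aview deg nbr x ` {v. \<exists>d\<le>r-x. (u, v) \<in> R ^^ d}"
    then obtain v d where h: "b = aview deg nbr x v" "d \<le> r - x" "(u, v) \<in> R ^^ d" by blast
    then obtain s vs where vs: "follow deg nbr u s = Some vs" "length vs = Suc d" "last vs = v"
      using walk_relpow[OF pg assms(2)] by blast
    have dle: "d \<le> Suc r" using h(2) by simp
    have "(s, aview deg nbr (Suc r - d) v) \<in> set (at_depth d (aview deg nbr (Suc r) u))"
      using at_depth_aview[OF dle, where s=s and deg=deg and nbr=nbr and u=u] h vs by blast
    moreover have "b = trunc x (aview deg nbr (Suc r - d) v)" using h(1,2) trunc_aview[of x "Suc r - d" deg nbr v] assms(1) by simp
    ultimately show "b \<in> gen_X x r (aview deg nbr (Suc r) u)" unfolding gen_X_def using h(2) by blast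
  qed
qed

lemma Y_eq:
  assumes "x \<le> r" "u \<in> V"
  shows "gen_Y x r (aview deg nbr (Suc r) u) = aview deg nbr x ` {v. (u, v) \<in> R ^^ Suc (r-x)}"
proof (rule set_eqI)
  fix b
  have e: "r - x + 1 = Suc (r - x)" by simp
  show "b \<in> gen_Y x r (aview deg nbr (Suc r) u) \<longleftrightarrow> b \<in> aview deg nbr x ` {v. (u, v) \<in> R ^^ Suc (r-x)}"
  proof
    assume "b \<in> gen_Y x r (aview deg nbr (Suc r) u)"
    then obtain s t where h: "b = trunc x t" "(s, t) \<in> set (at_depth (Suc (r - x)) (aview deg nbr (Suc r) u))"
      unfolding gen_Y_def e by blast
    have dle: "Suc (r - x) \<le> Suc r" by simp
    from h(2) at_depth_aview[OF dle, where s=s and t=t and deg=deg and nbr=nbr and u=u] obtain vs where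
      vs: "follow deg nbr u s = Some vs" "length vs = Suc (Suc (r-x))" "t = aview deg nbr (Suc r - Suc (r-x)) (last vs)"
      by blast
    have "b = aview deg nbr x (last vs)" using h(1) vs(3) trunc_aview[of x x deg nbr "last vs"] assms(1) by simp
    moreover have "(u, last vs) \<in> R ^^ Suc (r-x)" using walk_relpow[OF pg assms(2)] vs by blast
    ultimately show "b \<in> aview deg nbr x ` {v. (u, v) \<in> R ^^ Suc (r-x)}" by blast
  next
    assume "b \<in> aview deg nbr x ` {v. (u, v) \<in> R ^^ Suc (r-x)}"
    then obtain v where h: "b = aview deg nbr x v" "(u, v) \<in> R ^^ Suc (r-x)" by blast
    then obtain s vs where vs: "follow deg nbr u s = Some vs" "length vs = Suc (Suc (r-x))" "last vs = v"
      using walk_relpow[OF pg assms(2)] by blast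
    have dle: "Suc (r - x) \<le> Suc r" by simp
    have "(s, aview deg nbr (Suc r - Suc (r-x)) v) \<in> set (at_depth (Suc (r-x)) (aview deg nbr (Suc r) u))"
      using at_depth_aview[OF dle, where s=s and deg=deg and nbr=nbr and u=u] h vs by blast
    moreover have "b = trunc x (aview deg nbr (Suc r - Suc (r-x)) v)" using h(1) trunc_aview[of x x deg nbr v] assms(1) by simp
    ultimately show "b \<in> gen_Y x r (aview deg nbr (Suc r) u)" unfolding gen_Y_def e by blast
  qed
qed

lemma stop_iff:
  assumes "x \<le> r" "u \<in> V"
  shows "gen_stop x r (aview deg nbr (Suc r) u) \<longleftrightarrow>
     {v. (u, v) \<in> R ^^ Suc (r-x)} \<subseteq> {v. \<exists>d\<le>r-x. (u, v) \<in> R ^^ d}"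
proof -
  have s1: "{v. (u, v) \<in> R ^^ Suc (r-x)} \<subseteq> V" using relpow_V[OF pg] assms by blast
  have s2: "{v. \<exists>d\<le>r-x. (u, v) \<in> R ^^ d} \<subseteq> V" using relpow_V[OF pg] assms by blast
  show ?thesis unfolding gen_stop_def X_eq[OF assms] Y_eq[OF assms]
  proof
    assume a: "aview deg nbr x ` {v. (u, v) \<in> R ^^ Suc (r - x)} \<subseteq> aview deg nbr x ` {v. \<exists>d\<le>r - x. (u, v) \<in> R ^^ d}"
    show "{v. (u, v) \<in> R ^^ Suc (r-x)} \<subseteq> {v. \<exists>d\<le>r-x. (u, v) \<in> R ^^ d}"
    proof
      fix v assume v: "v \<in> {v. (u, v) \<in> R ^^ Suc (r-x)}"
      then obtain w where w: "w \<in> {v. \<exists>d\<le>r-x. (u, v) \<in> R ^^ d}" "aview deg nbr x v = aview deg nbr x w"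
        using a by force
      then have "v = w" using injx s1 s2 v unfolding inj_on_def by blast
      then show "v \<in> {v. \<exists>d\<le>r-x. (u, v) \<in> R ^^ d}" using w by simp
    qed
  qed blast
qed

lemma reach_all:
  assumes "u \<in> V" "{v. (u, v) \<in> R ^^ Suc k} \<subseteq> {v. \<exists>d\<le>k. (u, v) \<in> R ^^ d}"
  shows "V \<subseteq> {v. \<exists>d\<le>k. (u, v) \<in> R ^^ d}"
proof -
  have "\<forall>v. (u, v) \<in> R ^^ n \<longrightarrow> (\<exists>d\<le>k. (u, v) \<in> R ^^ d)" for n
  proof (induction n)
    case 0 then show ?case by (intro allI impI exI[of _ 0]) auto
  next
    case (Suc n)
    show ?case
    proof (intro allI impI)
      fix v assume "(u, v) \<in> R ^^ Suc n"
      then obtain w where w: "(u, w) \<in> R ^^ n" "(w, v) \<in> R" by (blast elim: relpow_Suc_E)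
      then obtain d where d: "d \<le> k" "(u, w) \<in> R ^^ d" using Suc.IH by blast
      have vs: "(u, v) \<in> R ^^ Suc d" using relpow_Suc_I[OF d(2) w(2)] .
      show "\<exists>d\<le>k. (u, v) \<in> R ^^ d"
      proof (cases "d < k")
        case True then show ?thesis using vs by (intro exI[of _ "Suc d"]) auto
      next
        case False then have "d = k" using d by auto
        then show ?thesis using vs assms(2) by blast
      qed
    qed
  qed
  moreover have "\<exists>n. (u, v) \<in> R ^^ n" if "v \<in> V" for v
    using con assms(1) that unfolding connected_pg_def by (blast dest: rtrancl_imp_relpow)
  ultimately show ?thesis by blast
qed

lemma dist_bound:
  assumes "u \<in> V" "v \<in> V"
  shows "(u, v) \<in> R ^^ gdist V deg nbr u v \<and> gdist V deg nbr u v \<le> diameter V deg nbr"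
proof
  have "\<exists>n. (u, v) \<in> R ^^ n"
    using con assms unfolding connected_pg_def by (blast dest: rtrancl_imp_relpow)
  then show "(u, v) \<in> R ^^ gdist V deg nbr u v" unfolding gdist_def by (rule LeastI_ex)
  have fin: "finite V" using pg unfolding port_graph_def by auto
  have "{gdist V deg nbr u v | u v. u \<in> V \<and> v \<in> V} = (\<lambda>(u, v). gdist V deg nbr u v) ` (V \<times> V)"
    by auto
  then have "finite {gdist V deg nbr u v | u v. u \<in> V \<and> v \<in> V}" using fin by simp
  then show "gdist V deg nbr u v \<le> diameter V deg nbr" unfolding diameter_def
    using assms by (intro Max_ge) auto
qed

lemma stop_D:
  assumes "u \<in> V"
  shows "gen_stop x (x + diameter V deg nbr) (aview deg nbr (Suc (x + diameter V deg nbr)) u)"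
proof -
  have "{v. (u, v) \<in> R ^^ Suc (diameter V deg nbr)} \<subseteq> {v. \<exists>d\<le>diameter V deg nbr. (u, v) \<in> R ^^ d}"
  proof
    fix v assume "v \<in> {v. (u, v) \<in> R ^^ Suc (diameter V deg nbr)}"
    then have "v \<in> V" using relpow_V[OF pg] assms by blast
    then show "v \<in> {v. \<exists>d\<le>diameter V deg nbr. (u, v) \<in> R ^^ d}" using dist_bound[OF assms] by blast
  qed
  then show ?thesis using stop_iff[of "x + diameter V deg nbr" u] assms by simp
qed


lemma W_iff:
  assumes "x \<le> r" "u \<in> V" "d \<le> r - x" "l \<in> V"
  shows "(\<exists>t. (s, t) \<in> set (at_depth d (aview deg nbr (Suc r) u)) \<and> trunc x t = aview deg nbr x l)
    \<longleftrightarrow> (\<exists>vs. follow deg nbr u s = Some vs \<and> length vs = Suc d \<and> last vs = l)"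
proof -
  have dle: "d \<le> Suc r" using assms by simp
  have xle: "x \<le> Suc r - d" using assms by simp
  have A: "(s, t) \<in> set (at_depth d (aview deg nbr (Suc r) u)) \<longleftrightarrow>
     (\<exists>vs. follow deg nbr u s = Some vs \<and> length vs = Suc d \<and> t = aview deg nbr (Suc r - d) (last vs))" for t
    using at_depth_aview[OF dle, where s=s and t=t and deg=deg and nbr=nbr and u=u] .
  have B: "follow deg nbr u s = Some vs \<Longrightarrow> length vs = Suc d \<Longrightarrow>
      aview deg nbr x (last vs) = aview deg nbr x l \<longleftrightarrow> last vs = l" for vs
  proof -
    assume a: "follow deg nbr u s = Some vs" "length vs = Suc d"
    then have "(u, last vs) \<in> R ^^ d" using walk_relpow[OF pg assms(2)] by blast
    then have "last vs \<in> V" using relpow_V[OF pg] assms(2) by blast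
    then show ?thesis using injx assms(4) unfolding inj_on_def by blast
  qed
  show ?thesis
  proof
    assume "\<exists>t. (s, t) \<in> set (at_depth d (aview deg nbr (Suc r) u)) \<and> trunc x t = aview deg nbr x l"
    then obtain t vs where h: "follow deg nbr u s = Some vs" "length vs = Suc d"
      "t = aview deg nbr (Suc r - d) (last vs)" "trunc x t = aview deg nbr x l"
      using A by blast
    then have "aview deg nbr x (last vs) = aview deg nbr x l"
      using trunc_aview[OF xle, of deg nbr "last vs"] by simp
    then show "\<exists>vs. follow deg nbr u s = Some vs \<and> length vs = Suc d \<and> last vs = l"
      using B h by blast
  next
    assume "\<exists>vs. follow deg nbr u s = Some vs \<and> length vs = Suc d \<and> last vs = l"
    then obtain vs where h: "follow deg nbr u s = Some vs" "length vs = Suc d" "last vs = l" by blast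
    then have "(s, aview deg nbr (Suc r - d) (last vs)) \<in> set (at_depth d (aview deg nbr (Suc r) u))"
      using A by blast
    moreover have "trunc x (aview deg nbr (Suc r - d) (last vs)) = aview deg nbr x l"
      using trunc_aview[OF xle, of deg nbr "last vs"] h by simp
    ultimately show "\<exists>t. (s, t) \<in> set (at_depth d (aview deg nbr (Suc r) u)) \<and> trunc x t = aview deg nbr x l"
      by blast
  qed
qed

lemma stop_round:
  assumes "u \<in> V"
  shows "x \<le> gen_stop_round deg nbr x u \<and>
    gen_stop x (gen_stop_round deg nbr x u) (aview deg nbr (Suc (gen_stop_round deg nbr x u)) u) \<and>
    gen_stop_round deg nbr x u \<le> x + diameter V deg nbr"
proof -
  have w: "x \<le> x + diameter V deg nbr \<and> gen_stop x (x + diameter V deg nbr) (aview deg nbr (Suc (x + diameter V deg nbr)) u)"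
    using stop_D[OF assms] by simp
  show ?thesis unfolding gen_stop_round_def
    using LeastI[of "\<lambda>r. x \<le> r \<and> gen_stop x r (aview deg nbr (Suc r) u)", OF w] Least_le[of "\<lambda>r. x \<le> r \<and> gen_stop x r (aview deg nbr (Suc r) u)", OF w]
    by blast
qed

lemma output_ok:
  assumes "inj code" "u \<in> V" "l \<in> V"
    and lmin: "\<forall>v\<in>V. v \<noteq> l \<longrightarrow> code (aview deg nbr x l) < code (aview deg nbr x v)"
  shows "\<exists>vs. follow deg nbr u (generic_out deg nbr code x u) = Some vs \<and> distinct vs \<and> last vs = l"
proof -
  define r where "r = gen_stop_round deg nbr x u"
  define B where "B = aview deg nbr (Suc r) u"
  define k where "k = r - x"
  have st: "x \<le> r" "gen_stop x r B" using stop_round[OF assms(2)] unfolding r_def B_def by auto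
  have sub: "{v. (u, v) \<in> R ^^ Suc k} \<subseteq> {v. \<exists>d\<le>k. (u, v) \<in> R ^^ d}"
    using stop_iff[OF st(1) assms(2)] st(2) unfolding B_def k_def by blast
  have VA: "V \<subseteq> {v. \<exists>d\<le>k. (u, v) \<in> R ^^ d}" using reach_all[OF assms(2) sub] .
  have AV: "{v. \<exists>d\<le>k. (u, v) \<in> R ^^ d} \<subseteq> V" using relpow_V[OF pg] assms(2) by blast
  have X: "gen_X x r B = aview deg nbr x ` V"
    using X_eq[OF st(1) assms(2)] VA AV unfolding B_def k_def by (simp add: subset_antisym)
  have bm: "gen_Bmin code x r B = aview deg nbr x l"
    unfolding gen_Bmin_def X
  proof (rule the_equality)
    show "aview deg nbr x l \<in> aview deg nbr x ` V \<and>
      (\<forall>c\<in>aview deg nbr x ` V. c \<noteq> aview deg nbr x l \<longrightarrow> view_less code (aview deg nbr x l) c)"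
      using lmin assms(3) by (auto simp: view_less_iff)
  next
    fix b assume b: "b \<in> aview deg nbr x ` V \<and>
      (\<forall>c\<in>aview deg nbr x ` V. c \<noteq> b \<longrightarrow> view_less code b c)"
    then obtain v where v: "v \<in> V" "b = aview deg nbr x v" by blast
    show "b = aview deg nbr x l"
    proof (rule ccontr)
      assume ne: "b \<noteq> aview deg nbr x l"
      then have "code b < code (aview deg nbr x l)" using b assms(3) by (auto simp: view_less_iff)
      moreover have "v \<noteq> l" using ne v by auto
      ultimately show False using lmin v by force
    qed
  qed
  define P where "P d \<longleftrightarrow> (\<exists>s t. (s, t) \<in> set (at_depth d B) \<and> trunc x t = aview deg nbr x l)" for d
  have P_iff: "d \<le> k \<Longrightarrow> P d \<longleftrightarrow> (u, l) \<in> R ^^ d" for d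
    using W_iff[OF st(1) assms(2) _ assms(3)] walk_relpow[OF pg assms(2)]
    unfolding P_def B_def k_def by blast
  obtain d1 where d1: "d1 \<le> k" "(u, l) \<in> R ^^ d1" using VA assms(3) by blast
  define d0 where "d0 = (LEAST d. P d)"
  have Pd1: "P d1" using P_iff d1 by blast
  have d0k: "d0 \<le> k" using Least_le[of P, OF Pd1] d1(1) unfolding d0_def by simp
  have Pd0: "P d0" using LeastI[of P, OF Pd1] unfolding d0_def .
  have rel0: "(u, l) \<in> R ^^ d0" using P_iff[OF d0k] Pd0 by blast
  have minimal: "d < d0 \<Longrightarrow> (u, l) \<notin> R ^^ d" for d
    using not_less_Least[of d P] P_iff[of d] d0k unfolding d0_def by auto
  define W where "W = {s. \<exists>t. (s, t) \<in> set (at_depth d0 B) \<and> trunc x t = aview deg nbr x l}"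
  have W_eq: "W = {s. \<exists>vs. follow deg nbr u s = Some vs \<and> length vs = Suc d0 \<and> last vs = l}"
    unfolding W_def B_def using W_iff[OF st(1) assms(2) _ assms(3)] d0k unfolding k_def by blast
  have finW: "finite W" unfolding W_def
    by (rule finite_subset[of _ "fst ` set (at_depth d0 B)"]) force+
  have neW: "W \<noteq> {}" using W_eq rel0 walk_relpow[OF pg assms(2)] by blast
  define s0 where "s0 = Min W"
  have s0W: "s0 \<in> W" unfolding s0_def using finW neW by simp
  have d0eq: "(LEAST d. \<exists>s t. (s, t) \<in> set (at_depth d B) \<and> trunc x t = aview deg nbr x l) = d0"
    unfolding d0_def P_def ..
  have Weq2: "{s. \<exists>t. (s, t) \<in> set (at_depth d0 B) \<and> trunc x t = aview deg nbr x l} = W"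
    unfolding W_def ..
  have go: "generic_out deg nbr code x u = gen_output code x r B"
    unfolding generic_out_def Let_def r_def B_def ..
  have go2: "gen_output code x r B = (THE s. s \<in> W \<and> (\<forall>s'\<in>W. s' \<noteq> s \<longrightarrow> (s, s') \<in> lexord {(a, b). a < b}))"
    unfolding gen_output_def Let_def bm d0eq Weq2 ..
  have out: "generic_out deg nbr code x u = s0"
    unfolding go go2
  proof (rule the_equality)
    show "s0 \<in> W \<and> (\<forall>s'\<in>W. s' \<noteq> s0 \<longrightarrow> (s0, s') \<in> lexord {(a, b). a < b})"
      using s0W finW unfolding s0_def list_less_def[symmetric] by (auto simp: order.strict_iff_order)
  next
    fix s assume s: "s \<in> W \<and> (\<forall>s'\<in>W. s' \<noteq> s \<longrightarrow> (s, s') \<in> lexord {(a, b). a < b})"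
    show "s = s0"
    proof (rule ccontr)
      assume "s \<noteq> s0"
      then have "s < s0" using s s0W unfolding list_less_def by auto
      moreover have "s0 \<le> s" using s finW unfolding s0_def by simp
      ultimately show False by simp
    qed
  qed
  obtain vs where vs: "follow deg nbr u s0 = Some vs" "length vs = Suc d0" "last vs = l"
    using s0W W_eq by blast
  have "distinct vs"
  proof (rule ccontr)
    assume "\<not> distinct vs"
    then obtain i j where ij: "i < j" "j < length vs" "vs ! i = vs ! j"
      unfolding distinct_conv_nth by (metis linorder_neqE_nat)
    have a: "(u, vs ! i) \<in> R ^^ i" using walk_idx[OF pg vs(1) assms(2), of i] ij by auto
    have b: "(vs ! j, l) \<in> R ^^ (length vs - 1 - j)" using walk_idx[OF pg vs(1) assms(2), of j] ij vs by auto
    have "(u, l) \<in> R ^^ (i + (length vs - 1 - j))"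
      using a b ij(3) relpow_add by fastforce
    moreover have "i + (length vs - 1 - j) < d0" using ij vs by auto
    ultimately show False using minimal by blast
  qed
  then show ?thesis using vs out by blast
qed

end

theorem lemma1:
  fixes V :: "'a set" and deg :: "'a \<Rightarrow> nat" and nbr :: "'a \<Rightarrow> nat \<Rightarrow> 'a"
    and code :: "view \<Rightarrow> bool list" and x :: nat
  assumes "port_graph V deg nbr"
    and "connected_pg V deg nbr"
    and "feasible V deg nbr"
    and "inj code"
    and "x \<ge> election_index V deg nbr"
  shows "(\<forall>u\<in>V. \<exists>r. x \<le> r \<and> gen_stop x r (aview deg nbr (Suc r) u))
       \<and> leader_election V deg nbr (generic_out deg nbr code x)
       \<and> (\<forall>u\<in>V. generic_time deg nbr x u \<le> diameter V deg nbr + x + 1)"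
proof -
  note pg = assms(1) and con = assms(2)
  have fin: "finite V" and ne: "V \<noteq> {}" using pg unfolding port_graph_def by auto
  define e where "e = election_index V deg nbr"
  have inje: "inj_on (aview deg nbr e) V"
    using assms(3) unfolding feasible_def e_def election_index_def by (rule LeastI_ex)
  have injx: "inj_on (aview deg nbr x) V"
  proof (rule inj_onI)
    fix v w assume "v \<in> V" "w \<in> V" "aview deg nbr x v = aview deg nbr x w"
    then have "trunc e (aview deg nbr x v) = trunc e (aview deg nbr x w)" by simp
    then have "aview deg nbr e v = aview deg nbr e w"
      using trunc_aview[of e x deg nbr] assms(5) unfolding e_def by simp
    then show "v = w" using inje \<open>v \<in> V\<close> \<open>w \<in> V\<close> unfolding inj_on_def by blast
  qed
  define c0 where "c0 = Min (code ` aview deg nbr x ` V)"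
  have "c0 \<in> code ` aview deg nbr x ` V" unfolding c0_def using fin ne by simp
  then obtain l where l: "l \<in> V" "code (aview deg nbr x l) = c0" by blast
  have lmin: "\<forall>v\<in>V. v \<noteq> l \<longrightarrow> code (aview deg nbr x l) < code (aview deg nbr x v)"
  proof (intro ballI impI)
    fix v assume v: "v \<in> V" "v \<noteq> l"
    then have "aview deg nbr x v \<noteq> aview deg nbr x l" using injx l(1) unfolding inj_on_def by blast
    then have "code (aview deg nbr x v) \<noteq> c0" using assms(4) l(2) unfolding inj_def by metis
    moreover have "c0 \<le> code (aview deg nbr x v)" unfolding c0_def using fin v by simp
    ultimately show "code (aview deg nbr x l) < code (aview deg nbr x v)" using l(2) by simp
  qed
  have c1: "\<forall>u\<in>V. \<exists>r. x \<le> r \<and> gen_stop x r (aview deg nbr (Suc r) u)"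
    using stop_round[OF pg con injx] by blast
  have c2: "leader_election V deg nbr (generic_out deg nbr code x)"
    unfolding leader_election_def
    using output_ok[OF pg con injx assms(4) _ l(1) lmin] l(1) by blast
  have c3: "\<forall>u\<in>V. generic_time deg nbr x u \<le> diameter V deg nbr + x + 1"
    using stop_round[OF pg con injx] unfolding generic_time_def by fastforce
  show ?thesis using c1 c2 c3 by blast
qed

end
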